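(* Let $k\ge2$, let $f:(k+1)^V\to\mathbb R_{\ge0}$ be a $k$-submodular function, and run Algorithm 2 with parameters $d_a\ge\frac12$ for all $a\in[k]$. Then for every part $a\in[k]$, $$\sum_{t\in T_a}\big(3w_{t,a}-\beta_a^{(t-1)}\big)+2n_a\beta_a\ \le\ Q_a\sum_{t\in S_a}w_{t,a},\qquad Q_a=2(1+d_a)\Big(1+\frac{1}{(1+d_a/n_a)^{n_a}-1}\Big).$$
   Context: Let $V$ be a finite ground set and $k\ge1$ an integer; $[k]=\{1,\dots,k\}$. $(k+1)^V$ denotes the set of $k$-tuples $\mathbf X=(X_1,\dots,X_k)$ of pairwise disjoint subsets of $V$; $\mathrm{supp}(\mathbf X)=X_1\cup\dots\cup X_k$; $\mathbf X\preceq\mathbf Y$ means $X_a\subseteq Y_a$ for all $a$; $(\mathbf X\sqcap\mathbf Y)_a=X_a\cap Y_a$ and $(\mathbf X\sqcup\mathbf Y)_a=(X_a\cup Y_a)\setminus\bigcup_{b\neq a}(X_b\cup Y_b)$. A function $f:(k+1)^V\to\mathbb R_{\ge0}$ is $k$-submodular if $f(\mathbf X)+f(\mathbf Y)\ge f(\mathbf X\sqcap\mathbf Y)+f(\mathbf X\sqcup\mathbf Y)$ for all $\mathbf X,\mathbf Y\in(k+1)^V$. For $t\notin\mathrm{supp}(\mathbf X)$ and $a\in[k]$, $\Delta_{t,a}f(\mathbf X)=f(X_1,\dots,X_{a-1},X_a\cup\{t\},X_{a+1},\dots,X_k)-f(\mathbf X)$. Budgets are positive integers $n_1,\dots,n_k$.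 Algorithm 2. The elements of $V$ are labeled $1,\dots,m$ in arrival order. Given $d_a>0$, set $c_a=(1+d_a)/\big((1+d_a/n_a)^{n_a}-1\big)$ and $g_a(i)=\frac{c_a}{n_a}(1+d_a/n_a)^{i-1}$ for $i\in[n_a]$. Maintain $\mathbf S$, initially $(\emptyset,\dots,\emptyset)$, and thresholds $\beta_a=0$. For $t=1,\dots,m$: compute $w_{t,a}=\Delta_{t,a}f(\mathbf S)$ for all $a$; let $a$ be a part maximizing the modified discounted gain $w_{t,a}-\beta_a-\min_{a'\neq a}\beta_{a'}$; if this modified discounted gain is $\ge0$, then: if $|S_a|<n_a$ add $t$ to $S_a$, otherwise remove from $S_a$ an element $t'$ minimizing $w_{t',a}$ over $S_a$ and add $t$; then set $\beta_a=\sum_{i=1}^{n_a}w_a(i)g_a(i)$ where $w_a(i)$ is the $i$-th largest value in $\{w_{s,a}:s\in S_a\}$ ($0$ if $i>|S_a|$). Weights are never recomputed. Otherwise $t$ is discarded. Output the final $\mathbf S$. Notation: $\mathbf S^{(t)}$ and $\beta_a^{(t)}$ denote the values after processing element $t$ (with $\mathbf S^{(0)}$ empty and $\beta_a^{(0)}=0$), so $w_{t,a}=\Delta_{t,a}f(\mathbf S^{(t-1)})$; $\mathbf S$, $\beta_a$ without superscript are final values; $T_a=\bigcup_t S_a^{(t)}$ is the set of elements ever placed in part $a$. *)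

theory Defs
  imports Complex_Main "HOL-Library.Multiset"
begin

text \<open>A k-tuple of pairwise disjoint subsets of V, represented as a function from part
indices to sets; parts are indexed by 1..k and all other indices map to the empty set.\<close>

definition ktuple :: "nat \<Rightarrow> nat set \<Rightarrow> (nat \<Rightarrow> nat set) \<Rightarrow> bool" where
  "ktuple k V X \<longleftrightarrow> (\<forall>a. a \<notin> {1..k} \<longrightarrow> X a = {}) \<and> (\<forall>a\<in>{1..k}. X a \<subseteq> V)
     \<and> (\<forall>a\<in>{1..k}. \<forall>b\<in>{1..k}. a \<noteq> b \<longrightarrow> X a \<inter> X b = {})"

definition kmeet :: "(nat \<Rightarrow> nat set) \<Rightarrow> (nat \<Rightarrow> nat set) \<Rightarrow> (nat \<Rightarrow> nat set)" where
  "kmeet X Y = (\<lambda>a. X a \<inter> Y a)"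

definition kjoin :: "nat \<Rightarrow> (nat \<Rightarrow> nat set) \<Rightarrow> (nat \<Rightarrow> nat set) \<Rightarrow> (nat \<Rightarrow> nat set)" where
  "kjoin k X Y = (\<lambda>a. (X a \<union> Y a) - (\<Union>b\<in>{1..k} - {a}. X b \<union> Y b))"

definition k_submodular :: "nat \<Rightarrow> nat set \<Rightarrow> ((nat \<Rightarrow> nat set) \<Rightarrow> real) \<Rightarrow> bool" where
  "k_submodular k V f \<longleftrightarrow> (\<forall>X Y. ktuple k V X \<longrightarrow> ktuple k V Y \<longrightarrow>
       f X + f Y \<ge> f (kmeet X Y) + f (kjoin k X Y))"

definition nonneg_on_tuples :: "nat \<Rightarrow> nat set \<Rightarrow> ((nat \<Rightarrow> nat set) \<Rightarrow> real) \<Rightarrow> bool" where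
  "nonneg_on_tuples k V f \<longleftrightarrow> (\<forall>X. ktuple k V X \<longrightarrow> f X \<ge> 0)"

definition marg :: "((nat \<Rightarrow> nat set) \<Rightarrow> real) \<Rightarrow> (nat \<Rightarrow> nat set) \<Rightarrow> nat \<Rightarrow> nat \<Rightarrow> real" where
  "marg f X t a = f (X(a := insert t (X a))) - f X"

definition cpar :: "real \<Rightarrow> nat \<Rightarrow> real" where
  "cpar d n = (1 + d) / ((1 + d / real n) ^ n - 1)"

definition gpar :: "real \<Rightarrow> nat \<Rightarrow> nat \<Rightarrow> real" where
  "gpar d n i = cpar d n / real n * (1 + d / real n) ^ (i - 1)"

definition ith_largest :: "real multiset \<Rightarrow> nat \<Rightarrow> real" where
  "ith_largest M i = (let L = rev (sorted_list_of_multiset M) in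
     if 1 \<le> i \<and> i \<le> length L then L ! (i - 1) else 0)"

definition threshold :: "(nat \<Rightarrow> real) \<Rightarrow> nat set \<Rightarrow> real \<Rightarrow> nat \<Rightarrow> real" where
  "threshold w A d n = (\<Sum>i=1..n. ith_largest (image_mset w (mset_set A)) i * gpar d n i)"

definition wt :: "((nat \<Rightarrow> nat set) \<Rightarrow> real) \<Rightarrow> (nat \<Rightarrow> nat \<Rightarrow> nat set) \<Rightarrow> nat \<Rightarrow> nat \<Rightarrow> real" where
  "wt f S t a = marg f (S (t - 1)) t a"

definition mgain :: "nat \<Rightarrow> ((nat \<Rightarrow> nat set) \<Rightarrow> real) \<Rightarrow> (nat \<Rightarrow> nat \<Rightarrow> nat set)
    \<Rightarrow> (nat \<Rightarrow> nat \<Rightarrow> real) \<Rightarrow> nat \<Rightarrow> nat \<Rightarrow> real" where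
  "mgain k f S beta t a = wt f S t a - beta (t - 1) a - Min ((\<lambda>b. beta (t - 1) b) ` ({1..k} - {a}))"

text \<open>A run of Algorithm 2 on elements 1..m (arrival order), with arbitrary tie-breaking.
  S t a = S_a^{(t)}, beta t a = beta_a^{(t)}.\<close>
definition alg2_run :: "nat \<Rightarrow> ((nat \<Rightarrow> nat set) \<Rightarrow> real) \<Rightarrow> (nat \<Rightarrow> nat) \<Rightarrow> (nat \<Rightarrow> real) \<Rightarrow> nat
    \<Rightarrow> (nat \<Rightarrow> nat \<Rightarrow> nat set) \<Rightarrow> (nat \<Rightarrow> nat \<Rightarrow> real) \<Rightarrow> bool" where
  "alg2_run k f n d m S beta \<longleftrightarrow>
     (\<forall>a. S 0 a = {} \<and> beta 0 a = 0) \<and>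
     (\<forall>t\<in>{1..m}.
        ((\<exists>a\<in>{1..k}. mgain k f S beta t a \<ge> 0 \<and>
            (\<forall>b\<in>{1..k}. mgain k f S beta t b \<le> mgain k f S beta t a) \<and>
            (if card (S (t - 1) a) < n a then S t a = insert t (S (t - 1) a)
             else (\<exists>t'\<in>S (t - 1) a. (\<forall>s\<in>S (t - 1) a. wt f S t' a \<le> wt f S s a) \<and>
                     S t a = insert t (S (t - 1) a - {t'}))) \<and>
            beta t a = threshold (\<lambda>s. wt f S s a) (S t a) (d a) (n a) \<and>
            (\<forall>b. b \<noteq> a \<longrightarrow> S t b = S (t - 1) b \<and> beta t b = beta (t - 1) b))
        \<or>
        ((\<forall>a\<in>{1..k}. mgain k f S beta t a < 0) \<and>
            (\<forall>b. S t b = S (t - 1) b \<and> beta t b = beta (t - 1) b))))"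

end

theory Submission
  imports Defs
begin

fun bl :: "(nat \<Rightarrow> real) \<Rightarrow> nat \<Rightarrow> real list \<Rightarrow> real" where
  "bl h k [] = 0"
| "bl h k (y # ys) = y * h k + bl h (Suc k) ys"

lemma bl_append: "bl h k (xs @ ys) = bl h k xs + bl h (k + length xs) ys"
  by (induction xs arbitrary: k) auto

lemma bl_shift:
  assumes "\<And>i. h (Suc i) = r * h i"
  shows "bl h (Suc k) ys = r * bl h k ys"
  by (induction ys arbitrary: k) (auto simp: assms algebra_simps)

lemma bl_nth: "bl h k xs = (\<Sum>i<length xs. xs ! i * h (k + i))"
proof (induction xs arbitrary: k)
  case Nil then show ?case by simp
next
  case (Cons y ys)
  show ?case by (simp add: Cons sum.lessThan_Suc_shift del: sum.lessThan_Suc)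
qed

lemma bl_lower:
  assumes "\<forall>y\<in>set xs. x \<le> y" "\<And>i. h i \<ge> 0"
  shows "bl h k xs \<ge> x * (\<Sum>i<length xs. h (k + i))"
  using assms(1)
proof (induction xs arbitrary: k)
  case Nil then show ?case by simp
next
  case (Cons y ys)
  have "x * h k \<le> y * h k" using Cons.prems assms(2) by (simp add: mult_right_mono)
  moreover have "x * (\<Sum>i<length ys. h (Suc k + i)) \<le> bl h (Suc k) ys" using Cons.IH[of "Suc k"] Cons.prems by simp
  ultimately show ?case by (simp add: sum.lessThan_Suc_shift distrib_left del: sum.lessThan_Suc)
qed

lemma bl_lower_strict:
  assumes "\<forall>y\<in>set xs. x < y" "\<And>i. h i > 0" "xs \<noteq> []"
  shows "bl h k xs > x * (\<Sum>i<length xs. h (k + i))"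
  using assms(1,3)
proof (induction xs arbitrary: k)
  case Nil then show ?case by simp
next
  case (Cons y ys)
  have "x * h k < y * h k" using Cons.prems assms(2) by (simp add: mult_strict_right_mono)
  moreover have "x * (\<Sum>i<length ys. h (Suc k + i)) \<le> bl h (Suc k) ys"
    by (rule bl_lower) (use Cons.prems assms(2) in \<open>auto intro: less_imp_le\<close>)
  ultimately show ?case by (simp add: sum.lessThan_Suc_shift distrib_left del: sum.lessThan_Suc)
qed

definition rr :: "real \<Rightarrow> nat \<Rightarrow> real" where "rr d n = 1 + d / real n"

lemma gpar_Suc: "gpar d n (Suc i) = cpar d n / real n * rr d n ^ i"
  by (simp add: gpar_def rr_def)

lemma rr_gt1: "n > 0 \<Longrightarrow> d > 0 \<Longrightarrow> rr d n > 1"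
  by (simp add: rr_def)

lemma rr_pow_gt1: "n > 0 \<Longrightarrow> d > 0 \<Longrightarrow> rr d n ^ n > 1"
  using rr_gt1 by (simp add: one_less_power)

lemma cpar_prop: "n > 0 \<Longrightarrow> d > 0 \<Longrightarrow> cpar d n * (rr d n ^ n - 1) = 1 + d"
  using rr_pow_gt1[of n d] by (simp add: cpar_def rr_def[symmetric])

lemma cpar_pos: "n > 0 \<Longrightarrow> d > 0 \<Longrightarrow> cpar d n > 0"
  using rr_pow_gt1[of n d] by (simp add: cpar_def rr_def[symmetric])

lemma gpar_pos: "n > 0 \<Longrightarrow> d > 0 \<Longrightarrow> gpar d n (Suc i) > 0"
  using cpar_pos[of n d] rr_gt1[of n d] by (simp add: gpar_Suc)

lemma gsum: assumes "n > 0" "d > 0"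
  shows "d * (\<Sum>i<j. gpar d n (Suc i)) = cpar d n * (rr d n ^ j - 1)"
proof -
  have r1: "rr d n \<noteq> 1" using rr_gt1[OF assms] by simp
  have "(\<Sum>i<j. gpar d n (Suc i)) = cpar d n / real n * (\<Sum>i<j. rr d n ^ i)"
    by (simp add: gpar_Suc sum_distrib_left)
  also have "\<dots> = cpar d n / real n * ((1 - rr d n ^ j) / (1 - rr d n))"
    using r1 by (simp add: sum_gp_strict)
  also have "\<dots> = cpar d n / real n * ((rr d n ^ j - 1) / (d / real n))"
  proof -
    have e: "1 - rr d n = - (d / real n)" by (simp add: rr_def)
    show ?thesis unfolding e by (simp add: minus_divide_right[symmetric] algebra_simps diff_divide_distrib)
  qed
  finally have "(\<Sum>i<j. gpar d n (Suc i)) = cpar d n / real n * ((rr d n ^ j - 1) / (d / real n))" .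
  moreover have "cpar d n / real n * ((rr d n ^ j - 1) / (d / real n)) = cpar d n * (rr d n ^ j - 1) / d"
    using assms by simp
  ultimately show ?thesis using assms by simp
qed

lemma Qform: assumes "n > 0" "d > 0"
  shows "2 * (1 + d) * (1 + 1 / (rr d n ^ n - 1)) = 2 * cpar d n * rr d n ^ n"
proof -
  have g: "rr d n ^ n - 1 > 0" using rr_pow_gt1[OF assms] by simp
  have "1 + d = cpar d n * (rr d n ^ n - 1)" using cpar_prop[OF assms] by simp
  then have "2 * (1 + d) * (1 + 1 / (rr d n ^ n - 1)) = 2 * cpar d n * ((rr d n ^ n - 1) * (1 + 1 / (rr d n ^ n - 1)))"
    by simp
  also have "(rr d n ^ n - 1) * (1 + 1 / (rr d n ^ n - 1)) = rr d n ^ n" using g by (simp add: field_simps)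
  finally show ?thesis by simp
qed

lemma key:
  fixes A B :: "real list"
  assumes n: "n > 0" and d: "d \<ge> 1/2" and len: "length A + length B = n" and B: "B \<noteq> []"
    and Ax: "\<forall>y\<in>set A. x \<le> y"
    and hdef: "h = (\<lambda>i. gpar d n (Suc i))"
    and xb: "x \<ge> bl h 0 (A @ B)"
  shows "3 * x - bl h 0 (A @ B) + 2 * real n * (bl h 0 (A @ x # butlast B) - bl h 0 (A @ B))
     \<le> 2 * (1 + d) * (1 + 1 / (rr d n ^ n - 1)) * (x - last B)"
proof -
  have d0: "d > 0" using d by simp
  define r where "r = rr d n"
  define c where "c = cpar d n"
  obtain B0 z where Bz: "B = B0 @ [z]" using B by (metis rev_exhaust)
  define j where "j = length A"
  define m0 where "m0 = length B0"
  have nj: "n = Suc (j + m0)" using len Bz by (simp add: j_def m0_def)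
  have hs: "\<And>i. h (Suc i) = r * h i" by (simp add: hdef gpar_Suc r_def)
  have hi: "\<And>i. h i = c / real n * r ^ i" by (simp add: hdef gpar_Suc r_def c_def)
  have hpos: "\<And>i. h i \<ge> 0" using gpar_pos[OF n d0] by (simp add: hdef less_imp_le)
  define SA where "SA = bl h 0 A"
  define SB where "SB = bl h j B0"
  define H where "H = h (j + m0)"
  have old: "bl h 0 (A @ B) = SA + SB + z * H"
    by (simp add: Bz bl_append SA_def SB_def H_def j_def m0_def)
  have new: "bl h 0 (A @ x # butlast B) = SA + x * h j + r * SB"
    by (simp add: Bz bl_append SA_def SB_def j_def bl_shift[where h=h and r=r, OF hs])
  have Q: "2 * (1 + d) * (1 + 1 / (rr d n ^ n - 1)) = 2 * c * r ^ n"
    using Qform[OF n d0] by (simp add: c_def r_def)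
  have nH: "real n * H * r = c * r ^ n"
    using n by (simp add: H_def hi nj)
  have nhj: "real n * h j = c * r ^ j" using n by (simp add: hi)
  have nr: "real n * (r - 1) = d" using n by (simp add: r_def rr_def)
  have SAlow: "SA \<ge> x * (\<Sum>i<j. h i)"
    using bl_lower[OF Ax hpos, where k=0] by (simp add: SA_def j_def)
  have gs: "d * (\<Sum>i<j. h i) = c * (r ^ j - 1)"
    using gsum[OF n d0, of j] by (simp add: hdef c_def r_def)
  have cp: "c * (r ^ n - 1) = 1 + d" using cpar_prop[OF n d0] by (simp add: c_def r_def)
  have xb': "x \<ge> SA + (SB + z * H)" using xb old by simp
  have E: "3 * x - (SA + SB + z * H) + 2 * real n * ((SA + x * h j + r * SB) - (SA + SB + z * H))
       - 2 * c * r ^ n * (x - z)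
     = 3 * x - SA + (2 * d - 1) * (SB + z * H) + 2 * (c * r ^ j) * x - 2 * c * r ^ n * x"
  proof -
    have a: "2 * real n * ((SA + x * h j + r * SB) - (SA + SB + z * H))
        = 2 * (real n * h j) * x + 2 * (real n * (r - 1)) * SB + 2 * (real n * (r - 1)) * (z * H)
          - 2 * (real n * H * r) * z"
      by (simp add: algebra_simps)
    show ?thesis unfolding a nhj nr nH by (simp add: algebra_simps)
  qed
  have m1: "(2 * d - 1) * (SB + z * H) \<le> (2 * d - 1) * (x - SA)"
    using xb' d by (intro mult_left_mono) auto
  have m2: "2 * d * SA \<ge> 2 * c * (r ^ j - 1) * x"
  proof -
    have "d * SA \<ge> d * (x * (\<Sum>i<j. h i))" using SAlow d0 by (simp add: mult_left_mono)
    also have "d * (x * (\<Sum>i<j. h i)) = x * (d * (\<Sum>i<j. h i))" by (simp add: algebra_simps)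
    also have "\<dots> = c * (r ^ j - 1) * x" unfolding gs by (simp add: algebra_simps)
    finally show ?thesis by simp
  qed
  have "3 * x - (SA + SB + z * H) + 2 * real n * ((SA + x * h j + r * SB) - (SA + SB + z * H))
       - 2 * c * r ^ n * (x - z) \<le> 0"
  proof -
    have "2 * c * r ^ n * x = 2 * (c * (r ^ n - 1)) * x + 2 * c * x" by (simp add: algebra_simps)
    also have "\<dots> = 2 * (1 + d) * x + 2 * c * x" using cp by simp
    finally have e3: "2 * c * r ^ n * x = 2 * (1 + d) * x + 2 * c * x" .
    have e4: "2 * c * (r ^ j - 1) * x = 2 * (c * r ^ j) * x - 2 * c * x" by (simp add: algebra_simps)
    show ?thesis unfolding E using m1 m2 e3 e4 by (simp add: algebra_simps)
  qed
  moreover have lz: "last B = z" using Bz by simp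
  ultimately show ?thesis unfolding old new Q lz by (simp add: algebra_simps)
qed

definition pad :: "nat \<Rightarrow> real multiset \<Rightarrow> real list" where
  "pad n M = rev (sorted_list_of_multiset M) @ replicate (n - size M) 0"

lemma pad_length: "size M \<le> n \<Longrightarrow> length (pad n M) = n"
  by (simp add: pad_def size_mset[symmetric] del: size_mset)

lemma length_sl: "length (sorted_list_of_multiset M) = size M"
  by (metis mset_sorted_list_of_multiset size_mset)

lemma pad_length': "size M \<le> n \<Longrightarrow> length (pad n M) = n"
  by (simp add: pad_def length_sl)

lemma pad_mset: "mset (pad n M) = M + replicate_mset (n - size M) 0"
  by (simp add: pad_def)

lemma sorted_wrt_ge_replicate: "sorted_wrt (\<ge>) (replicate k (x::real))"
  by (induction k) auto

lemma pad_sorted: "\<forall>y\<in>#M. 0 \<le> y \<Longrightarrow> sorted_wrt (\<ge>) (pad n M)"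
  unfolding pad_def sorted_wrt_append
  by (auto simp: sorted_wrt_rev sorted_wrt_ge_replicate)

lemma pad_unique:
  assumes "sorted_wrt (\<ge>) P" "mset P = mset (pad n M)" "sorted_wrt (\<ge>) (pad n M)"
  shows "P = pad n M"
proof -
  have s1: "sorted (rev P)" using assms(1) by (simp add: sorted_wrt_rev)
  have s2: "sorted (rev (pad n M))" using assms(3) by (simp add: sorted_wrt_rev)
  have "sort (rev P) = rev P" using s1 by (intro properties_for_sort) auto
  moreover have "sort (rev P) = rev (pad n M)" using s2 assms(2) by (intro properties_for_sort) auto
  ultimately show ?thesis by simp
qed

lemma thr_pad:
  assumes "size M \<le> n"
  shows "(\<Sum>i=1..n. ith_largest M i * g i) = bl (\<lambda>i. g (Suc i)) 0 (pad n M)"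
proof -
  have "(\<Sum>i=1..n. ith_largest M i * g i) = (\<Sum>i<n. ith_largest M (Suc i) * g (Suc i))"
    using sum.atLeast1_atMost_eq[of "\<lambda>i. ith_largest M i * g i" n] by simp
  also have "\<dots> = (\<Sum>i<n. pad n M ! i * g (Suc i))"
  proof (rule sum.cong)
    fix i assume i: "i \<in> {..<n}"
    have "ith_largest M (Suc i) = pad n M ! i"
      using i assms by (auto simp: ith_largest_def pad_def Let_def nth_append length_sl)
    then show "ith_largest M (Suc i) * g (Suc i) = pad n M ! i * g (Suc i)" by simp
  qed simp
  also have "\<dots> = bl (\<lambda>i. g (Suc i)) 0 (pad n M)"
    by (simp add: bl_nth pad_length' assms)
  finally show ?thesis .
qed

lemma ith_nonneg: "\<forall>y\<in>#M. 0 \<le> y \<Longrightarrow> ith_largest M i \<ge> 0"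
proof -
  assume a: "\<forall>y\<in>#M. 0 \<le> y"
  let ?L = "rev (sorted_list_of_multiset M)"
  show ?thesis
  proof (cases "1 \<le> i \<and> i \<le> length ?L")
    case True
    then have "?L ! (i - 1) \<in> set ?L" by (intro nth_mem) linarith
    then have "?L ! (i - 1) \<in># M" by simp
    then show ?thesis using a True by (simp add: ith_largest_def Let_def)
  next
    case False then show ?thesis by (auto simp add: ith_largest_def Let_def)
  qed
qed

lemma threshold_nonneg:
  assumes "\<forall>s\<in>A. w s \<ge> 0" "n > 0" "d > 0"
  shows "threshold w A d n \<ge> 0"
  unfolding threshold_def
proof (rule sum_nonneg)
  fix i assume i: "i \<in> {1..n}"
  have "ith_largest (image_mset w (mset_set A)) i \<ge> 0"
    by (rule ith_nonneg) (use assms(1) in \<open>cases "finite A", auto\<close>)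
  moreover have "gpar d n i \<ge> 0" using i gpar_pos[OF assms(2,3), of "i - 1"] by simp
  ultimately show "ith_largest (image_mset w (mset_set A)) i * gpar d n i \<ge> 0" by simp
qed

lemma sorted_ge_last: "sorted_wrt (\<ge>) (xs::real list) \<Longrightarrow> y \<in> set xs \<Longrightarrow> last xs \<le> y"
proof (induction xs)
  case Nil then show ?case by simp
next
  case (Cons a xs)
  show ?case
  proof (cases "xs = []")
    case True then show ?thesis using Cons by simp
  next
    case False
    have "last xs \<in> set xs" using False by simp
    then have "last xs \<le> a" using Cons.prems(1) by auto
    then show ?thesis using Cons False by auto
  qed
qed

lemma step_ineq:
  fixes w :: "nat \<Rightarrow> real"
  assumes n: "n > 0" and d: "d \<ge> 1/2" and fin: "finite S0" and card: "card S0 \<le> n" and t: "t \<notin> S0"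
    and nn: "\<forall>s\<in>S0. 0 \<le> w s" and xge: "w t \<ge> threshold w S0 d n"
    and upd: "(card S0 < n \<and> S1 = insert t S0) \<or>
              (card S0 = n \<and> (\<exists>t'\<in>S0. (\<forall>s\<in>S0. w t' \<le> w s) \<and> S1 = insert t (S0 - {t'})))"
  shows "3 * w t - threshold w S0 d n + 2 * real n * (threshold w S1 d n - threshold w S0 d n)
     \<le> 2 * (1 + d) * (1 + 1 / ((1 + d / real n) ^ n - 1)) * (sum w S1 - sum w S0)"
proof -
  have d0: "d > 0" using d by simp
  define h where "h = (\<lambda>i. gpar d n (Suc i))"
  define x where "x = w t"
  define M0 where "M0 = image_mset w (mset_set S0)"
  define M1 where "M1 = image_mset w (mset_set S1)"
  define P where "P = pad n M0"
  have sM0: "size M0 = card S0" by (simp add: M0_def)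
  have M0nn: "\<forall>y\<in>#M0. 0 \<le> y" using nn fin by (auto simp: M0_def)
  have thr0: "threshold w S0 d n = bl h 0 P"
    unfolding threshold_def P_def h_def M0_def[symmetric] using card sM0 by (intro thr_pad) simp
  have x0: "x \<ge> 0" using threshold_nonneg[OF nn n d0] xge by (simp add: x_def)
  have Psorted: "sorted_wrt (\<ge>) P" using pad_sorted[OF M0nn] by (simp add: P_def)
  have Plen: "length P = n" using pad_length'[of M0 n] card sM0 by (simp add: P_def)
  define A where "A = takeWhile (\<lambda>y. x < y) P"
  define B where "B = dropWhile (\<lambda>y. x < y) P"
  have PAB: "P = A @ B" by (simp add: A_def B_def)
  have sAB: "sorted_wrt (\<ge>) A \<and> sorted_wrt (\<ge>) B \<and> (\<forall>a\<in>set A. \<forall>b\<in>set B. b \<le> a)"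
    using Psorted PAB by (metis sorted_wrt_append)
  have Ax: "\<forall>y\<in>set A. x < y" by (auto simp: A_def dest: set_takeWhileD)
  have Bne: "B \<noteq> []"
  proof
    assume B0: "B = []"
    then have allg: "\<forall>y\<in>set P. x < y" by (simp add: B_def)
    show False
    proof (cases "card S0 < n")
      case True
      then have "0 \<in> set P" by (simp add: P_def pad_def sM0)
      then show False using allg x0 by auto
    next
      case False
      have Pne: "P \<noteq> []" using Plen n by auto
      have "bl h 0 P > x * (\<Sum>i<length P. h (0 + i))"
        by (rule bl_lower_strict[OF allg _ Pne]) (simp add: h_def gpar_pos[OF n d0])
      moreover have "d * (\<Sum>i<n. h i) = 1 + d"
        using gsum[OF n d0, of n] cpar_prop[OF n d0] by (simp add: h_def)
      then have "(\<Sum>i<n. h i) = (1 + d) / d" using d0 by (simp add: field_simps)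
      moreover have "x * ((1 + d) / d) \<ge> x" using x0 d0 by (simp add: field_simps)
      ultimately have "bl h 0 P > x" using Plen by simp
      then show False using xge thr0 by (simp add: x_def)
    qed
  qed
  have hdB: "\<forall>y\<in>set B. y \<le> x"
  proof
    fix y assume y: "y \<in> set B"
    have "\<not> x < hd B" using hd_dropWhile Bne by (simp add: B_def)
    moreover have "y \<le> hd B"
    proof -
      obtain b bs where "B = b # bs" using Bne by (cases B) auto
      then show ?thesis using y sAB by auto
    qed
    ultimately show "y \<le> x" by simp
  qed
  define P' where "P' = A @ x # butlast B"
  have Bsplit: "B = butlast B @ [last B]" using Bne by simp
  have P'sorted: "sorted_wrt (\<ge>) P'"
  proof -
    have "sorted_wrt (\<ge>) (butlast B)" using sAB Bsplit by (metis sorted_wrt_append)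
    moreover have "\<forall>y\<in>set (butlast B). y \<le> x" using hdB by (auto dest: in_set_butlastD)
    ultimately show ?thesis using sAB Ax by (auto simp: P'_def sorted_wrt_append dest: in_set_butlastD)
  qed
  have msetP': "mset P' + {#last B#} = mset P + {#x#}"
  proof -
    have "mset B = mset (butlast B) + {#last B#}" by (subst Bsplit) simp
    then show ?thesis by (simp add: P'_def PAB)
  qed
  have key1: "mset (pad n M1) + {#last B#} = mset P + {#x#} \<and> size M1 \<le> n"
  proof (cases "card S0 < n")
    case True
    then have S1: "S1 = insert t S0" using upd by auto
    have M1: "M1 = add_mset x M0" using fin t by (simp add: M1_def M0_def S1 x_def)
    have lastP: "last P = 0" using True by (simp add: P_def pad_def sM0)
    have lB: "last B = 0" using lastP PAB Bne by simp
    have "mset (pad n M1) + {#last B#} = M0 + {#x#} + replicate_mset (n - card S0) 0"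
      using True by (simp add: pad_mset M1 sM0 lB Suc_diff_Suc[symmetric])
    then show ?thesis using True by (simp add: P_def pad_mset sM0 M1)
  next
    case False
    then have cn: "card S0 = n" using card by simp
    then obtain t' where t': "t' \<in> S0" "\<forall>s\<in>S0. w t' \<le> w s" "S1 = insert t (S0 - {t'})"
      using upd by auto
    define M' where "M' = image_mset w (mset_set (S0 - {t'}))"
    have M0e: "M0 = add_mset (w t') M'"
      using mset_set.remove[OF fin t'(1)] by (simp add: M0_def M'_def)
    have M1e: "M1 = add_mset x M'"
      using fin t t' by (simp add: M1_def M'_def x_def)
    have PL: "P = rev (sorted_list_of_multiset M0)" using cn by (simp add: P_def pad_def sM0)
    have lB: "last B = last P" using PAB Bne by simp
    have "last P \<in> set P" using Plen n by (intro last_in_set) auto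
    then have "last P \<in># M0" by (simp add: PL)
    then obtain s where s: "s \<in> S0" "last P = w s" using fin by (auto simp: M0_def)
    have "w t' \<in> set P" using t'(1) fin by (simp add: PL M0_def)
    then have "last P \<le> w t'" using sorted_ge_last[OF Psorted] by blast
    moreover have "w t' \<le> last P" using s t'(2) by simp
    ultimately have lw: "last B = w t'" using lB by simp
    have sz: "size M1 = n" using M0e M1e sM0 cn by simp
    show ?thesis using sz cn by (simp add: pad_mset P_def sM0 M0e M1e lw)
  qed
  have P'eq: "P' = pad n M1"
  proof (rule pad_unique[OF P'sorted])
    show "mset P' = mset (pad n M1)" using msetP' key1 by (metis add_right_cancel)
    have "\<forall>y\<in>#M1. 0 \<le> y"
    proof -
      have "\<forall>y\<in>#M1 + {#last B#}. 0 \<le> y"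
      proof -
        have "mset P' + {#last B#} = M0 + replicate_mset (n - size M0) 0 + {#x#}"
          using msetP' by (simp add: P_def pad_mset)
        moreover have "mset (pad n M1) + {#last B#} = M1 + replicate_mset (n - size M1) 0 + {#last B#}"
          by (simp add: pad_mset)
        ultimately have "M1 + replicate_mset (n - size M1) 0 + {#last B#} = M0 + replicate_mset (n - size M0) 0 + {#x#}"
          using key1 msetP' by simp
        moreover have R: "\<forall>y\<in># M0 + replicate_mset (n - size M0) 0 + {#x#}. 0 \<le> y"
          using M0nn x0 by auto
        ultimately show ?thesis by (metis R union_iff)
      qed
      then show ?thesis by simp
    qed
    then show "sorted_wrt (\<ge>) (pad n M1)" by (rule pad_sorted)
  qed
  have thr1: "threshold w S1 d n = bl h 0 P'"
    unfolding threshold_def P'eq h_def M1_def[symmetric] using key1 by (intro thr_pad) simp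
  have sums: "sum w S1 - sum w S0 = x - last B"
  proof -
    have "sum w S1 = sum_mset M1" by (simp add: M1_def sum_unfold_sum_mset)
    also have "\<dots> = sum_list (pad n M1)" by (simp add: pad_mset sum_mset_sum_list[symmetric])
    finally have a: "sum w S1 = sum_list (pad n M1)" .
    have "sum w S0 = sum_mset M0" by (simp add: M0_def sum_unfold_sum_mset)
    also have "\<dots> = sum_list P" by (simp add: P_def pad_mset sum_mset_sum_list[symmetric])
    finally have b: "sum w S0 = sum_list P" .
    have "sum_list P' + last B = sum_list P + x"
      using arg_cong[OF msetP', of sum_mset] by (simp add: sum_mset_sum_list)
    then show ?thesis using a b P'eq by simp
  qed
  have "3 * x - bl h 0 (A @ B) + 2 * real n * (bl h 0 (A @ x # butlast B) - bl h 0 (A @ B))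
     \<le> 2 * (1 + d) * (1 + 1 / (rr d n ^ n - 1)) * (x - last B)"
    by (rule key[OF n d _ Bne _ h_def]) (use Plen PAB Ax xge thr0 in \<open>auto simp: x_def intro: less_imp_le\<close>)
  then show ?thesis using thr0 thr1 sums PAB unfolding P'_def x_def rr_def by simp
qed

lemma run_step:
  assumes "alg2_run k f n d m S beta" "t \<in> {1..m}"
  shows "(\<exists>a\<in>{1..k}. mgain k f S beta t a \<ge> 0 \<and>
            (if card (S (t - 1) a) < n a then S t a = insert t (S (t - 1) a)
             else (\<exists>t'\<in>S (t - 1) a. (\<forall>s\<in>S (t - 1) a. wt f S t' a \<le> wt f S s a) \<and>
                     S t a = insert t (S (t - 1) a - {t'}))) \<and>
            beta t a = threshold (\<lambda>s. wt f S s a) (S t a) (d a) (n a) \<and>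
            (\<forall>b. b \<noteq> a \<longrightarrow> S t b = S (t - 1) b \<and> beta t b = beta (t - 1) b))
        \<or> (\<forall>b. S t b = S (t - 1) b \<and> beta t b = beta (t - 1) b)"
  using assms unfolding alg2_run_def by blast

lemma min_nonneg:
  fixes k a :: nat
  assumes "k \<ge> 2" "\<forall>b\<in>{1..k}. (0::real) \<le> bt b"
  shows "0 \<le> Min (bt ` ({1..k} - {a}))"
proof -
  have "{1..k} - {a} \<noteq> {}"
  proof (cases "a = 1")
    case True then have "2 \<in> {1..k} - {a}" using assms by auto
    then show ?thesis by blast
  next
    case False then have "1 \<in> {1..k} - {a}" using assms by auto
    then show ?thesis by blast
  qed
  then show ?thesis using assms(2) by (subst Min_ge_iff) auto
qed

definition INV where
  "INV k f n d S beta s b \<longleftrightarrow> finite (S s b) \<and> card (S s b) \<le> n b \<and> S s b \<subseteq> {1..s} \<and>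
     (\<forall>t\<in>S s b. 0 \<le> wt f S t b \<and> t \<in> S t b) \<and> 0 \<le> beta s b \<and>
     beta s b = threshold (\<lambda>t. wt f S t b) (S s b) (d b) (n b)"

lemma inv:
  assumes k: "k \<ge> 2" and n: "\<forall>a\<in>{1..k}. n a > 0" and d: "\<forall>a\<in>{1..k}. d a \<ge> 1/2"
    and run: "alg2_run k f n d m S beta"
  shows "s \<le> m \<Longrightarrow> \<forall>b\<in>{1..k}. INV k f n d S beta s b"
proof (induction s)
  case 0
  have "\<forall>a. S 0 a = {} \<and> beta 0 a = 0" using run by (simp add: alg2_run_def)
  then show ?case by (simp add: INV_def threshold_def ith_largest_def)
next
  case (Suc s)
  then have IH: "\<forall>b\<in>{1..k}. INV k f n d S beta s b" by simp
  have tm: "Suc s \<in> {1..m}" using Suc.prems by simp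
  have bnn: "\<forall>b\<in>{1..k}. 0 \<le> beta s b" using IH unfolding INV_def by blast
  show ?case
    using run_step[OF run tm, unfolded diff_Suc_1]
  proof
    assume "\<exists>a\<in>{1..k}. mgain k f S beta (Suc s) a \<ge> 0 \<and>
            (if card (S s a) < n a then S (Suc s) a = insert (Suc s) (S s a)
             else (\<exists>t'\<in>S s a. (\<forall>s\<in>S s a. wt f S t' a \<le> wt f S s a) \<and>
                     S (Suc s) a = insert (Suc s) (S s a - {t'}))) \<and>
            beta (Suc s) a = threshold (\<lambda>s. wt f S s a) (S (Suc s) a) (d a) (n a) \<and>
            (\<forall>b. b \<noteq> a \<longrightarrow> S (Suc s) b = S s b \<and> beta (Suc s) b = beta s b)"
    then obtain a where a: "a \<in> {1..k}" "mgain k f S beta (Suc s) a \<ge> 0"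
      and upd: "if card (S s a) < n a then S (Suc s) a = insert (Suc s) (S s a)
             else (\<exists>t'\<in>S s a. (\<forall>x\<in>S s a. wt f S t' a \<le> wt f S x a) \<and>
                     S (Suc s) a = insert (Suc s) (S s a - {t'}))"
      and bt: "beta (Suc s) a = threshold (\<lambda>s. wt f S s a) (S (Suc s) a) (d a) (n a)"
      and oth: "\<forall>b. b \<noteq> a \<longrightarrow> S (Suc s) b = S s b \<and> beta (Suc s) b = beta s b"
      by auto
    have Ia: "INV k f n d S beta s a" using IH a by simp
    have mn: "0 \<le> Min ((\<lambda>b. beta s b) ` ({1..k} - {a}))" using min_nonneg[OF k bnn] .
    have wge: "wt f S (Suc s) a \<ge> beta s a" using a(2) mn by (simp add: mgain_def)
    have w0: "wt f S (Suc s) a \<ge> 0" using wge Ia by (simp add: INV_def)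
    have na: "n a > 0" "d a > 0" using n d a by force+
    have new: "finite (S (Suc s) a) \<and> card (S (Suc s) a) \<le> n a \<and> S (Suc s) a \<subseteq> {1..Suc s} \<and>
       (\<forall>t\<in>S (Suc s) a. 0 \<le> wt f S t a \<and> t \<in> S t a)"
    proof (cases "card (S s a) < n a")
      case True
      then have e: "S (Suc s) a = insert (Suc s) (S s a)" using upd by simp
      have "card (insert (Suc s) (S s a)) \<le> Suc (card (S s a))" using Ia by (simp add: INV_def card_insert_le_m1)
      then show ?thesis using True Ia w0 e by (auto simp: INV_def)
    next
      case False
      then obtain t' where t': "t' \<in> S s a" "S (Suc s) a = insert (Suc s) (S s a - {t'})" using upd by auto
      have fin: "finite (S s a)" using Ia by (simp add: INV_def)
      have "card (insert (Suc s) (S s a - {t'})) \<le> Suc (card (S s a - {t'}))" using fin by (simp add: card_insert_le_m1)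
      moreover have "card (S s a - {t'}) = card (S s a) - 1" using fin t' by simp
      moreover have "card (S s a) \<ge> 1" using fin t' by (metis One_nat_def Suc_leI card_gt_0_iff empty_iff)
      ultimately have "card (S (Suc s) a) \<le> card (S s a)" using t' by simp
      then show ?thesis using Ia w0 t' by (auto simp: INV_def)
    qed
    have thr_nn: "0 \<le> beta (Suc s) a" unfolding bt using new na by (intro threshold_nonneg) auto
    show ?thesis
    proof
      fix b assume b: "b \<in> {1..k}"
      show "INV k f n d S beta (Suc s) b"
      proof (cases "b = a")
        case True then show ?thesis using new thr_nn bt by (simp add: INV_def)
      next
        case False
        have Ib: "INV k f n d S beta s b" using IH b by simp
        then show ?thesis using oth False by (auto simp: INV_def)
      qed
    qed
  next
    assume u: "\<forall>b. S (Suc s) b = S s b \<and> beta (Suc s) b = beta s b"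
    show ?thesis
    proof
      fix b assume b: "b \<in> {1..k}"
      have Ib: "INV k f n d S beta s b" using IH b by simp
      have "S (Suc s) b = S s b" "beta (Suc s) b = beta s b" using u by auto
      then show "INV k f n d S beta (Suc s) b" using Ib unfolding INV_def by auto
    qed
  qed
qed

theorem mainTheorem9:
  fixes k m :: nat and f :: "(nat \<Rightarrow> nat set) \<Rightarrow> real"
    and n :: "nat \<Rightarrow> nat" and d :: "nat \<Rightarrow> real"
    and S :: "nat \<Rightarrow> nat \<Rightarrow> nat set" and beta :: "nat \<Rightarrow> nat \<Rightarrow> real"
  assumes "k \<ge> 2"
    and "k_submodular k {1..m} f"
    and "nonneg_on_tuples k {1..m} f"
    and "\<forall>a\<in>{1..k}. n a > 0"
    and "\<forall>a\<in>{1..k}. d a \<ge> 1/2"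
    and "alg2_run k f n d m S beta"
    and "a \<in> {1..k}"
  shows "(\<Sum>t\<in>(\<Union>s\<in>{0..m}. S s a). 3 * wt f S t a - beta (t - 1) a) + 2 * real (n a) * beta m a
         \<le> 2 * (1 + d a) * (1 + 1 / ((1 + d a / real (n a)) ^ (n a) - 1))
           * (\<Sum>t\<in>S m a. wt f S t a)"
proof -
  note k = assms(1) and nA = assms(4) and dA = assms(5) and run = assms(6) and a = assms(7)
  define Q where "Q = 2 * (1 + d a) * (1 + 1 / ((1 + d a / real (n a)) ^ (n a) - 1))"
  define G where "G = (\<lambda>t. 3 * wt f S t a - beta (t - 1) a)"
  define Ad where "Ad = (\<lambda>s. {t\<in>{1..s}. t \<in> S t a})"
  have na: "n a > 0" and da: "d a \<ge> 1/2" using nA dA a by auto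
  have Inv: "\<And>s b. s \<le> m \<Longrightarrow> b \<in> {1..k} \<Longrightarrow> INV k f n d S beta s b"
    using inv[OF k nA dA run] by blast
  have Phi: "s \<le> m \<Longrightarrow> sum G (Ad s) + 2 * real (n a) * beta s a - Q * (\<Sum>t\<in>S s a. wt f S t a) \<le> 0" for s
  proof (induction s)
    case 0
    have "\<forall>a. S 0 a = {} \<and> beta 0 a = 0" using run by (simp add: alg2_run_def)
    moreover have "Ad 0 = {}" by (auto simp: Ad_def)
    ultimately show ?case by simp
  next
    case (Suc s)
    then have IH: "sum G (Ad s) + 2 * real (n a) * beta s a - Q * (\<Sum>t\<in>S s a. wt f S t a) \<le> 0" by simp
    have tm: "Suc s \<in> {1..m}" using Suc.prems by simp
    have Ia: "INV k f n d S beta s a" using Inv[of s a] Suc.prems a by simp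
    have bnn: "\<forall>b\<in>{1..k}. 0 \<le> beta s b"
    proof
      fix b assume "b \<in> {1..k}"
      then have "INV k f n d S beta s b" using Inv[of s b] Suc.prems by simp
      then show "0 \<le> beta s b" unfolding INV_def by blast
    qed
    have fin: "finite (Ad s)" by (simp add: Ad_def)
    have nots: "Suc s \<notin> Ad s" by (simp add: Ad_def)
    have notS: "Suc s \<notin> S s a" using Ia by (auto simp: INV_def)
    show ?case
      using run_step[OF run tm, unfolded diff_Suc_1]
    proof
      assume "\<exists>a\<in>{1..k}. mgain k f S beta (Suc s) a \<ge> 0 \<and>
            (if card (S s a) < n a then S (Suc s) a = insert (Suc s) (S s a)
             else (\<exists>t'\<in>S s a. (\<forall>s\<in>S s a. wt f S t' a \<le> wt f S s a) \<and>
                     S (Suc s) a = insert (Suc s) (S s a - {t'}))) \<and>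
            beta (Suc s) a = threshold (\<lambda>s. wt f S s a) (S (Suc s) a) (d a) (n a) \<and>
            (\<forall>b. b \<noteq> a \<longrightarrow> S (Suc s) b = S s b \<and> beta (Suc s) b = beta s b)"
      then obtain a' where a': "a' \<in> {1..k}" "mgain k f S beta (Suc s) a' \<ge> 0"
        and upd: "if card (S s a') < n a' then S (Suc s) a' = insert (Suc s) (S s a')
             else (\<exists>t'\<in>S s a'. (\<forall>x\<in>S s a'. wt f S t' a' \<le> wt f S x a') \<and>
                     S (Suc s) a' = insert (Suc s) (S s a' - {t'}))"
        and bt: "beta (Suc s) a' = threshold (\<lambda>s. wt f S s a') (S (Suc s) a') (d a') (n a')"
        and oth: "\<forall>b. b \<noteq> a' \<longrightarrow> S (Suc s) b = S s b \<and> beta (Suc s) b = beta s b"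
        by auto
      show ?thesis
      proof (cases "a' = a")
        case False
        then have u: "S (Suc s) a = S s a" "beta (Suc s) a = beta s a" using oth by auto
        then have "Ad (Suc s) = Ad s" using notS by (auto simp: Ad_def le_Suc_eq)
        then show ?thesis using IH u by simp
      next
        case True
        have mn: "0 \<le> Min ((\<lambda>b. beta s b) ` ({1..k} - {a}))" using min_nonneg[OF k bnn] .
        have wge: "wt f S (Suc s) a \<ge> beta s a" using a'(2) mn True by (simp add: mgain_def)
        have upd': "(card (S s a) < n a \<and> S (Suc s) a = insert (Suc s) (S s a)) \<or>
              (card (S s a) = n a \<and> (\<exists>t'\<in>S s a. (\<forall>x\<in>S s a. wt f S t' a \<le> wt f S x a) \<and>
                  S (Suc s) a = insert (Suc s) (S s a - {t'})))"
          using upd True Ia by (auto simp: INV_def split: if_splits)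
        have thr0: "beta s a = threshold (\<lambda>t. wt f S t a) (S s a) (d a) (n a)" using Ia by (simp add: INV_def)
        have st: "3 * wt f S (Suc s) a - beta s a + 2 * real (n a) * (beta (Suc s) a - beta s a)
            \<le> Q * ((\<Sum>t\<in>S (Suc s) a. wt f S t a) - (\<Sum>t\<in>S s a. wt f S t a))"
          unfolding Q_def thr0 bt[unfolded True]
          by (rule step_ineq[OF na da _ _ notS _ _ upd']) (use Ia wge thr0 in \<open>auto simp: INV_def\<close>)
        have inS: "Suc s \<in> S (Suc s) a" using upd' by auto
        then have "Ad (Suc s) = insert (Suc s) (Ad s)" by (auto simp: Ad_def le_Suc_eq)
        then have "sum G (Ad (Suc s)) = G (Suc s) + sum G (Ad s)" using fin nots by simp
        then show ?thesis using IH st by (simp add: G_def algebra_simps)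
      qed
    next
      assume u: "\<forall>b. S (Suc s) b = S s b \<and> beta (Suc s) b = beta s b"
      then have "Ad (Suc s) = Ad s" using notS by (auto simp: Ad_def le_Suc_eq)
      then show ?thesis using IH u by simp
    qed
  qed
  have T: "(\<Union>s\<in>{0..m}. S s a) = Ad m"
  proof
    show "(\<Union>s\<in>{0..m}. S s a) \<subseteq> Ad m"
    proof
      fix t assume "t \<in> (\<Union>s\<in>{0..m}. S s a)"
      then obtain s where s: "s \<le> m" "t \<in> S s a" by auto
      then show "t \<in> Ad m" using Inv[OF s(1) a] by (auto simp: INV_def Ad_def)
    qed
    show "Ad m \<subseteq> (\<Union>s\<in>{0..m}. S s a)" by (auto simp: Ad_def)
  qed
  show ?thesis using Phi[of m] unfolding T Q_def[symmetric] G_def by simp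
qed

end
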